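(* Define $\mu:[0,\infty)\to\mathbb R$ by $\mu(0)=0$ and, for $s>0$, $\mu(s)=\dfrac{\cosh s-\cos s-\sin s\,\sinh s}{\sin^2\frac{s}{2}\,(\sinh s-s)-\sinh^2\frac{s}{2}\,(\sin s-s)}$. Then $\mu$ is nonnegative, has countably many points $0=s_0<s_1<s_2<\dots$ where it vanishes, and on each interval $(s_k,s_{k+1})$, $k=0,1,2,\dots$, $\mu$ has a unique critical point $m_k$; on each such interval $\mu$ strictly increases from $0$ to $\mu(m_k)$ and then strictly decreases from $\mu(m_k)$ to $0$. *)

theory Defs
  imports "HOL-Analysis.Analysis"
begin

definition mu :: "real \<Rightarrow> real" where
  "mu s = (if s = 0 then 0 else
     (cosh s - cos s - sin s * sinh s) /
     ((sin (s/2))^2 * (sinh s - s) - (sinh (s/2))^2 * (sin s - s)))"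

end

theory Submission
  imports Defs "HOL-Analysis.Analysis"
begin

definition NN :: "real \<Rightarrow> real" where "NN x = cosh x - cos x - sin x * sinh x"
definition DD :: "real \<Rightarrow> real" where "DD x = (sin (x/2))^2 * (sinh x - x) - (sinh (x/2))^2 * (sin x - x)"
definition g :: "real \<Rightarrow> real" where "g t = cos t * sinh t - sin t * cosh t"
definition EE :: "real \<Rightarrow> real" where "EE t = sinh t ^ 2 - sin t ^ 2"
definition AA :: "real \<Rightarrow> real" where "AA t = sinh t * cosh t - sin t * cos t"
definition WW :: "real \<Rightarrow> real" where "WW t = 2 * EE t * (-2 * sin t * sinh t) - g t * 2 * AA t"

lemma mu_eq: "mu x = NN x / DD x"
  by (simp add: mu_def NN_def DD_def)

lemma pyth1: "cos (t::real) ^ 2 = 1 - sin t ^ 2" by (simp add: cos_squared_eq)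
lemma pyth2: "cosh (t::real) ^ 2 = 1 + sinh t ^ 2" by (simp add: cosh_square_eq)
lemmas pyth = pyth1 pyth2

lemma NN2: "NN (2*t) = 2 * g t ^ 2"
proof -
  have "NN (2*t) = cosh t ^2 + sinh t ^2 - (cos t ^ 2 - sin t ^2) - 2 * sin t * cos t * (2 * sinh t * cosh t)"
    by (simp add: NN_def cos_double sinh_double cosh_double sin_double)
  also have "\<dots> = 2 * g t ^ 2"
    unfolding g_def using pyth[of t] by algebra
  finally show ?thesis .
qed

lemma DD2: "DD (2*t) = -2 * sin t * sinh t * g t + 2 * t * EE t"
proof -
  have "DD (2*t) = sin t ^2 * (2 * sinh t * cosh t - 2*t) - sinh t ^2 * (2 * sin t * cos t - 2*t)"
    by (simp add: DD_def sinh_double sin_double)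
  also have "\<dots> = -2 * sin t * sinh t * g t + 2 * t * EE t"
    unfolding g_def EE_def by algebra
  finally show ?thesis .
qed

definition NN' :: "real \<Rightarrow> real" where "NN' x = sinh x + sin x - (cos x * sinh x + sin x * cosh x)"
definition DD' :: "real \<Rightarrow> real" where "DD' x = sin(x/2)*cos(x/2)*(sinh x - x) + sin(x/2)^2*(cosh x - 1) - (sinh(x/2)*cosh(x/2)*(sin x - x) + sinh(x/2)^2*(cos x - 1))"

lemma NN_deriv: "(NN has_real_derivative NN' x) (at x)"
  unfolding NN_def[abs_def] NN'_def
  by (rule derivative_eq_intros refl | simp)+

lemma DD_deriv: "(DD has_real_derivative DD' x) (at x)"
  unfolding DD_def[abs_def] DD'_def
  by (rule derivative_eq_intros refl | simp)+

lemma key_id: "NN' (2*t) * DD (2*t) - NN (2*t) * DD' (2*t) = 2 * t * g t * WW t"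
proof -
  have "NN' (2*t) = 2 * sinh t * cosh t + 2 * sin t * cos t - ((cos t ^ 2 - sin t ^ 2) * (2 * sinh t * cosh t) + 2 * sin t * cos t * (cosh t ^2 + sinh t ^2))"
    by (simp add: NN'_def sinh_double sin_double cos_double cosh_double)
  moreover have "DD' (2*t) = sin t * cos t * (2 * sinh t * cosh t - 2*t) + sin t ^2 * (cosh t ^2 + sinh t ^2 - 1) - (sinh t * cosh t * (2 * sin t * cos t - 2*t) + sinh t ^2 * (cos t ^ 2 - sin t ^ 2 - 1))"
    by (simp add: DD'_def sinh_double sin_double cos_double cosh_double)
  moreover have "DD (2*t) = sin t ^2 * (2 * sinh t * cosh t - 2*t) - sinh t ^2 * (2 * sin t * cos t - 2*t)"
    by (simp add: DD_def sinh_double sin_double)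
  moreover have "NN (2*t) = cosh t ^2 + sinh t ^2 - (cos t ^ 2 - sin t ^2) - 2 * sin t * cos t * (2 * sinh t * cosh t)"
    by (simp add: NN_def cos_double sinh_double cosh_double sin_double)
  ultimately show ?thesis
    unfolding WW_def g_def EE_def AA_def using pyth[of t] by algebra
qed

lemma nonneg_deriv:
  fixes f f' :: "real \<Rightarrow> real"
  assumes "\<And>u. 0 \<le> u \<Longrightarrow> u \<le> t \<Longrightarrow> (f has_real_derivative f' u) (at u)"
    and "\<And>u. 0 \<le> u \<Longrightarrow> u \<le> t \<Longrightarrow> f' u \<ge> 0" and "f 0 \<ge> 0" and "0 \<le> t"
  shows "f t \<ge> 0"
proof -
  have "f 0 \<le> f t"
    by (rule DERIV_nonneg_imp_nondecreasing[OF \<open>0 \<le> t\<close>]) (use assms in blast)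
  with assms show ?thesis by linarith
qed

lemma sinh_ge: assumes "0 \<le> (t::real)" shows "t \<le> sinh t"
proof -
  have "0 \<le> (\<lambda>u. sinh u - u) t"
    by (rule nonneg_deriv[where f="\<lambda>u. sinh u - u" and f'="\<lambda>u. cosh u - 1"]) (auto intro!: derivative_eq_intros simp: assms cosh_real_ge_1)
  then show ?thesis by simp
qed
lemma cos_ge: assumes "0 \<le> (t::real)" shows "1 - t^2/2 \<le> cos t"
proof -
  have "0 \<le> (\<lambda>u. cos u - 1 + u^2/2) t"
    by (rule nonneg_deriv[where f="\<lambda>u. cos u - 1 + u^2/2" and f'="\<lambda>u. u - sin u"]) (auto intro!: derivative_eq_intros simp: assms sin_x_le_x)
  then show ?thesis by simp
qed
lemma cosh_ge: assumes "0 \<le> (t::real)" shows "1 + t^2/2 \<le> cosh t"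
proof -
  have "0 \<le> (\<lambda>u. cosh u - 1 - u^2/2) t"
    by (rule nonneg_deriv[where f="\<lambda>u. cosh u - 1 - u^2/2" and f'="\<lambda>u. sinh u - u"]) (auto intro!: derivative_eq_intros simp: assms sinh_ge)
  then show ?thesis by simp
qed
lemma sinh_ge3: assumes "0 \<le> (t::real)" shows "t + t^3/6 \<le> sinh t"
proof -
  have "0 \<le> (\<lambda>u. sinh u - u - u^3/6) t"
    by (rule nonneg_deriv[where f="\<lambda>u. sinh u - u - u^3/6" and f'="\<lambda>u. cosh u - 1 - u^2/2"]) (auto intro!: derivative_eq_intros simp: assms dest: cosh_ge)
  then show ?thesis by simp
qed
lemma sinh_sin_plus: assumes "0 \<le> (t::real)" shows "2*t \<le> sinh t + sin t"
proof -
  have "0 \<le> (\<lambda>u. sinh u + sin u - 2*u) t"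
    by (rule nonneg_deriv[where f="\<lambda>u. sinh u + sin u - 2*u" and f'="\<lambda>u. cosh u + cos u - 2"]) (auto intro!: derivative_eq_intros simp: assms intro: order.trans[OF _ add_mono[OF cosh_ge cos_ge]])
  then show ?thesis by simp
qed
lemma cosh_cos_minus: assumes "0 \<le> (t::real)" shows "t^2 \<le> cosh t - cos t"
proof -
  have "0 \<le> (\<lambda>u. cosh u - cos u - u^2) t"
    by (rule nonneg_deriv[where f="\<lambda>u. cosh u - cos u - u^2" and f'="\<lambda>u. sinh u + sin u - 2*u"]) (auto intro!: derivative_eq_intros simp: assms sinh_sin_plus)
  then show ?thesis by simp
qed
lemma sinh_sin_minus: assumes "0 \<le> (t::real)" shows "t^3/3 \<le> sinh t - sin t"
proof -
  have "0 \<le> (\<lambda>u. sinh u - sin u - u^3/3) t"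
    by (rule nonneg_deriv[where f="\<lambda>u. sinh u - sin u - u^3/3" and f'="\<lambda>u. cosh u - cos u - u^2"]) (auto intro!: derivative_eq_intros simp: assms cosh_cos_minus)
  then show ?thesis by simp
qed
lemma EE_ge: "0 \<le> (t::real) \<Longrightarrow> 2*t^4/3 \<le> EE t"
proof -
  assume t: "0 \<le> t"
  have "EE t = (sinh t - sin t) * (sinh t + sin t)" by (simp add: EE_def power2_eq_square algebra_simps)
  moreover have "(t^3/3) * (2*t) \<le> (sinh t - sin t) * (sinh t + sin t)"
    by (rule mult_mono) (use t sinh_sin_minus[OF t] sinh_sin_plus[OF t] zero_le_power[OF t, of 3] in linarith)+
  ultimately show ?thesis by (simp add: power_numeral_reduce)
qed

lemma EE_pos: "0 < (t::real) \<Longrightarrow> 0 < EE t"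
proof -
  assume "0 < t" then have "0 < t^4" by simp
  with EE_ge[of t] \<open>0 < t\<close> show ?thesis by linarith
qed


lemma g_deriv: "(g has_real_derivative (-2 * sin t * sinh t)) (at t)"
  unfolding g_def[abs_def] by (rule derivative_eq_intros refl | simp)+

lemma g_neg: assumes "0 < t" "t \<le> pi" shows "g t < 0"
proof -
  have "g t < g 0"
  proof (rule DERIV_neg_imp_decreasing_open[OF assms(1)])
    fix u assume u: "0 < u" "u < t"
    then have "sin u > 0" using assms by (intro sin_gt_zero) auto
    with u show "\<exists>y. (g has_real_derivative y) (at u) \<and> y < 0"
      using g_deriv[of u] by (intro exI[of _ "-2 * sin u * sinh u"]) auto
  next
    show "continuous_on {0..t} g"
      using g_deriv by (meson DERIV_isCont continuous_at_imp_continuous_on)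
  qed
  then show ?thesis by (simp add: g_def)
qed

lemma g_nonpos: assumes "0 \<le> t" "t \<le> pi" shows "g t \<le> 0"
  using g_neg[of t] assms by (cases "t = 0") (auto simp: g_def)

lemma nonneg_deriv2:
  fixes f f' :: "real \<Rightarrow> real"
  assumes "\<And>u. (f has_real_derivative f' u) (at u)"
    and "\<And>u. 0 \<le> u \<Longrightarrow> u \<le> t \<Longrightarrow> f' u \<ge> 0" and "f 0 \<ge> 0" and "0 \<le> t"
  shows "f t \<ge> 0"
  using nonneg_deriv[of t f f'] assms by blast

lemma cc_le1: assumes "0 \<le> t" "t \<le> pi" shows "cos t * cosh t \<le> 1"
proof -
  have d: "((\<lambda>u. 1 - cos u * cosh u) has_real_derivative - g u) (at u)" for u
    unfolding g_def by (rule derivative_eq_intros refl | simp)+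
  have "0 \<le> 1 - cos t * cosh t"
    using nonneg_deriv2[where f="\<lambda>u. 1 - cos u * cosh u", OF d] g_nonpos assms by force
  then show ?thesis by simp
qed

lemma r_le: assumes "0 \<le> t" "t \<le> pi" shows "cos t * sinh t + sin t * cosh t \<le> 2 * t"
proof -
  have d: "((\<lambda>u. 2 * u - (cos u * sinh u + sin u * cosh u)) has_real_derivative 2 - 2 * (cos u * cosh u)) (at u)" for u
    by (rule derivative_eq_intros refl | simp)+
  have "0 \<le> 2 * t - (cos t * sinh t + sin t * cosh t)"
    using nonneg_deriv2[where f="\<lambda>u. 2 * u - (cos u * sinh u + sin u * cosh u)", OF d] cc_le1 assms by force
  then show ?thesis by simp
qed

lemma p_le: assumes "0 \<le> t" "t \<le> pi" shows "sin t * sinh t \<le> t^2"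
proof -
  have d: "((\<lambda>u. u^2 - sin u * sinh u) has_real_derivative 2 * u - (cos u * sinh u + sin u * cosh u)) (at u)" for u
    by (rule derivative_eq_intros refl | simp)+
  have "0 \<le> t^2 - sin t * sinh t"
    using nonneg_deriv2[where f="\<lambda>u. u^2 - sin u * sinh u", OF d] r_le assms by force
  then show ?thesis by simp
qed

lemma g_bound: assumes "0 \<le> t" "t \<le> pi" shows "- g t \<le> 2 * t^3 / 3"
proof -
  have d: "((\<lambda>u. 2 * u^3/3 + g u) has_real_derivative 2 * u^2 - 2 * sin u * sinh u) (at u)" for u
    by (rule derivative_eq_intros refl g_deriv | simp)+
  have "0 \<le> 2 * t^3/3 + g t"
    using nonneg_deriv2[where f="\<lambda>u. 2 * u^3/3 + g u", OF d] p_le assms by (force simp: g_def)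
  then show ?thesis by simp
qed

lemma ineq_small: assumes "0 < t" "t \<le> 2" shows "g t ^ 4 < EE t ^ 3"
proof -
  have tpi: "t \<le> pi" using assms pi_gt3 by linarith
  have a: "0 \<le> - g t" using g_nonpos[of t] assms tpi by simp
  have "g t ^ 4 = (- g t) ^ 4" by simp
  also have "\<dots> \<le> (2 * t^3 / 3) ^ 4"
    by (rule power_mono[OF g_bound a]) (use assms tpi in auto)
  also have "\<dots> = 16/81 * t^12" by (simp add: power_mult_distrib power_divide flip: power_mult)
  also have "\<dots> < 8/27 * t^12" using assms by simp
  also have "8/27 * t^12 = (2 * t^4/3) ^ 3" by (simp add: power_mult_distrib power_divide flip: power_mult)
  also have "\<dots> \<le> EE t ^ 3"
    by (rule power_mono[OF EE_ge]) (use assms in auto)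
  finally show ?thesis .
qed

lemma ineq_large: assumes "2 \<le> t" shows "g t ^ 4 < EE t ^ 3"
proof -
  have "2 + 8/6 \<le> sinh (2::real)" using sinh_ge3[of 2] by simp
  moreover have "sinh 2 \<le> sinh t" using assms by simp
  ultimately have sh: "3 \<le> sinh t" by linarith
  define x where "x = sinh t ^ 2"
  have x9: "9 \<le> x" unfolding x_def using power_mono[OF sh, of 2] by simp
  have "g t ^ 2 + (sin t * sinh t + cos t * cosh t) ^ 2 = (cos t ^ 2 + sin t ^ 2) * (sinh t ^ 2 + cosh t ^ 2)"
    unfolding g_def by algebra
  then have "g t ^ 2 \<le> 2 * x + 1"
  proof -
    assume h: "g t ^ 2 + (sin t * sinh t + cos t * cosh t) ^ 2 = (cos t ^ 2 + sin t ^ 2) * (sinh t ^ 2 + cosh t ^ 2)"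
    have "cos t ^ 2 + sin t ^ 2 = 1" by simp
    with h pyth2[of t] have "g t ^ 2 + (sin t * sinh t + cos t * cosh t) ^ 2 = 2 * x + 1"
      unfolding x_def by simp
    moreover have "0 \<le> (sin t * sinh t + cos t * cosh t) ^ 2" by simp
    ultimately show ?thesis by linarith
  qed
  moreover have g0: "0 \<le> g t ^ 2" by simp
  ultimately have "g t ^ 4 \<le> (2 * x + 1) ^ 2"
    by (metis power_mono power2_eq_square power4_eq_xxxx mult.assoc)
  also have "\<dots> < (x - 1) ^ 3"
  proof -
    have "8 * (x-1)^2 \<le> (x - 1) * (x-1)^2" by (rule mult_right_mono) (use x9 in auto)
    moreover have "(2 * x + 1) ^ 2 < 8 * (x-1)^2"
    proof -
      have "9*x \<le> x*x" by (rule mult_right_mono) (use x9 in auto)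
      moreover have "(2*x+1)^2 = 4*(x*x) + 4*x + 1" "8*(x-1)^2 = 8*(x*x) - 16*x + 8"
        by (simp_all add: power2_eq_square algebra_simps)
      ultimately show ?thesis using x9 by linarith
    qed
    ultimately show ?thesis by (simp add: power3_eq_cube power2_eq_square algebra_simps)
  qed
  also have "\<dots> \<le> EE t ^ 3"
    by (rule power_mono) (use x9 sin_le_one[of t] in \<open>auto simp: x_def EE_def abs_square_le_1\<close>)
  finally show ?thesis .
qed

lemma ineq: assumes "0 < t" shows "g t ^ 4 < EE t ^ 3"
  using ineq_small ineq_large assms by (cases "t \<le> 2") auto

definition FF :: "real \<Rightarrow> real" where "FF t = -2 * sin t * sinh t / g t - AA t / EE t"

lemma AA_deriv: "(AA has_real_derivative (cosh t^2 + sinh t^2 - cos t^2 + sin t^2)) (at t)"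
  unfolding AA_def[abs_def] by (rule derivative_eq_intros refl | simp add: power2_eq_square)+

lemma EE_deriv: "(EE has_real_derivative 2 * AA t) (at t)"
  unfolding EE_def[abs_def] AA_def by (rule derivative_eq_intros refl | simp add: power2_eq_square algebra_simps)+

lemma p_deriv: "((\<lambda>t. -2 * sin t * sinh t) has_real_derivative -2 * (cos t * sinh t + sin t * cosh t)) (at t)"
  by (rule derivative_eq_intros refl | simp add: algebra_simps)+

lemma id1: "(-2 * (cos t * sinh t + sin t * cosh t)) * g t - (-2 * sin t * sinh t) * (-2 * sin t * sinh t) = -2 * EE t"
  unfolding g_def EE_def using pyth[of t] by algebra

lemma id2: "(cosh t^2 + sinh t^2 - cos t^2 + sin t^2) * EE t - AA t * (2 * AA t) = -2 * g t ^ 2"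
  unfolding g_def EE_def AA_def using pyth[of t] by algebra

lemma FF_deriv: assumes "g t \<noteq> 0" "EE t \<noteq> 0"
  shows "(FF has_real_derivative (-2 * EE t / g t ^ 2 + 2 * g t ^ 2 / EE t ^ 2)) (at t)"
proof -
  have "FF = (\<lambda>t. (\<lambda>t. -2 * sin t * sinh t) t / g t - AA t / EE t)"
    by (simp add: FF_def[abs_def])
  moreover have "((\<lambda>t. (\<lambda>t. -2 * sin t * sinh t) t / g t - AA t / EE t) has_real_derivative
      ((-2 * (cos t * sinh t + sin t * cosh t)) * g t - (-2 * sin t * sinh t) * (-2 * sin t * sinh t)) / (g t * g t)
      - ((cosh t^2 + sinh t^2 - cos t^2 + sin t^2) * EE t - AA t * (2 * AA t)) / (EE t * EE t)) (at t)"
    by (rule DERIV_diff[OF DERIV_divide[OF p_deriv g_deriv] DERIV_divide[OF AA_deriv EE_deriv]]) (use assms in auto)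
  ultimately have "(FF has_real_derivative (-2 * EE t) / (g t * g t) - (-2 * g t ^ 2) / (EE t * EE t)) (at t)"
    by (simp only: id1 id2)
  then show ?thesis
    by (rule DERIV_cong) (simp add: power2_eq_square)
qed

lemma FF_deriv_neg: assumes "0 < t" "g t \<noteq> 0"
  shows "-2 * EE t / g t ^ 2 + 2 * g t ^ 2 / EE t ^ 2 < 0"
proof -
  have E: "0 < EE t" using EE_pos assms by auto
  have g2: "0 < g t ^ 2" using assms by simp
  have "g t ^ 2 / EE t ^ 2 < EE t / g t ^ 2"
    using ineq[OF assms(1)] E g2
    by (simp add: divide_simps) (metis power2_eq_square power3_eq_cube power4_eq_xxxx mult.assoc mult.commute)
  then show ?thesis by simp
qed

lemma sin_lt: assumes "0 < (x::real)" shows "sin x < x"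
proof (cases "x > 1")
  case True then show ?thesis using sin_le_one[of x] by linarith
next
  case False
  have s: "0 < sin (x/2)" using False assms pi_gt3 by (intro sin_gt_zero) auto
  have s2: "sin (x/2) \<le> x/2" using assms by (intro sin_x_le_x) auto
  have "cos (x/2) < 1"
  proof (rule ccontr)
    assume "\<not> cos (x/2) < 1"
    then have "cos (x/2) = 1" using cos_le_one[of "x/2"] by linarith
    then have "sin (x/2) ^ 2 = 0" using sin_cos_squared_add[of "x/2"] by simp
    with s show False by simp
  qed
  have "sin x = 2 * sin (x/2) * cos (x/2)" using sin_double[of "x/2"] by simp
  also have "\<dots> < 2 * sin (x/2)" using s \<open>cos (x/2) < 1\<close> by simp
  also have "\<dots> \<le> x" using s2 by simp
  finally show ?thesis .
qed

lemma DD_pos: assumes "0 < x" shows "0 < DD x"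
proof -
  have "DD x = sin (x/2) ^ 2 * (sinh x - x) + sinh (x/2) ^ 2 * (x - sin x)"
    by (simp add: DD_def algebra_simps)
  moreover have "0 \<le> sin (x/2) ^ 2 * (sinh x - x)" using sinh_ge[of x] assms by simp
  moreover have "0 < sinh (x/2) ^ 2 * (x - sin x)" using sin_lt[OF assms] assms by simp
  ultimately show ?thesis by linarith
qed

lemma NN_half: "NN x = 2 * g (x/2) ^ 2"
  using NN2[of "x/2"] by simp

lemma mu_nonneg: assumes "0 \<le> x" shows "0 \<le> mu x"
proof (cases "x = 0")
  case True then show ?thesis by (simp add: mu_def)
next
  case False
  then have "0 < DD x" using DD_pos assms by simp
  then show ?thesis by (simp add: mu_eq NN_half)
qed

lemma mu_zero_iff: assumes "0 < x" shows "mu x = 0 \<longleftrightarrow> g (x/2) = 0"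
  using DD_pos[OF assms] by (simp add: mu_eq NN_half)

lemma mu_fun: "mu = (\<lambda>x. NN x / DD x)"
  by (simp add: mu_eq[abs_def])

lemma mu_deriv: assumes "0 < x"
  shows "(mu has_real_derivative (NN' x * DD x - NN x * DD' x) / (DD x * DD x)) (at x)"
  unfolding mu_fun using DD_pos[OF assms]
  by (intro DERIV_divide NN_deriv DD_deriv) auto

lemma mu_isCont: assumes "0 < x" shows "isCont mu x"
  using mu_deriv[OF assms] by (rule DERIV_isCont)

lemma gW: assumes "g t \<noteq> 0" "EE t \<noteq> 0" shows "g t * WW t = 2 * EE t * g t ^ 2 * FF t"
  using assms unfolding WW_def FF_def by (simp add: field_simps power2_eq_square)

lemma mu_deriv_FF: assumes "0 < t" "g t \<noteq> 0"
  shows "\<exists>c>0. (mu has_real_derivative c * FF t) (at (2*t))"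
proof -
  have E: "0 < EE t" using EE_pos assms by auto
  have D: "0 < DD (2*t)" using DD_pos assms by simp
  define c where "c = 4 * t * EE t * g t ^ 2 / (DD (2*t) * DD (2*t))"
  have c: "0 < c" unfolding c_def using assms E D by simp
  have "(NN' (2*t) * DD (2*t) - NN (2*t) * DD' (2*t)) / (DD (2*t) * DD (2*t)) = c * FF t"
    unfolding key_id c_def using gW[of t] assms E by (simp add: field_simps)
  with mu_deriv[of "2*t"] assms c show ?thesis by auto
qed

lemma mu_small: assumes "0 < x" "x \<le> 4" shows "mu x \<le> x / 3"
proof -
  define t where "t = x/2"
  have t: "0 < t" "t \<le> 2" "t \<le> pi" using assms pi_gt3 unfolding t_def by auto
  have x: "x = 2*t" unfolding t_def by simp
  have gb: "- g t \<le> 2 * t^3/3" "0 \<le> - g t" using g_bound[of t] g_nonpos[of t] t by auto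
  have E: "2*t^4/3 \<le> EE t" using EE_ge[of t] t by simp
  have sn: "0 \<le> sin t" using t by (intro sin_ge_zero) auto
  have "0 \<le> -2 * sin t * sinh t * g t" using sn gb t by (simp add: mult_nonneg_nonneg mult_nonpos_nonneg)
  then have D: "2 * t * EE t \<le> DD (2*t)" by (simp add: DD2)
  have D0: "0 < 2 * t * (2*t^4/3)" using t by simp
  have "g t ^ 2 \<le> (2 * t^3/3)^2"
    using power_mono[OF gb(1) gb(2), of 2] by simp
  then have N: "NN (2*t) \<le> 2 * (2 * t^3/3)^2" by (simp add: NN2)
  have "mu (2*t) = NN (2*t) / DD (2*t)" by (simp add: mu_eq)
  also have "\<dots> \<le> (2 * (2 * t^3/3)^2) / (2 * t * (2*t^4/3))"
  proof (rule frac_le)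
    show "0 \<le> 2 * (2 * t ^ 3 / 3)\<^sup>2" by simp
    show "NN (2 * t) \<le> 2 * (2 * t ^ 3 / 3)\<^sup>2" by (rule N)
    show "0 < 2 * t * (2 * t ^ 4 / 3)" by (rule D0)
    show "2 * t * (2 * t ^ 4 / 3) \<le> DD (2 * t)"
      using D mult_left_mono[OF E, of "2*t"] t by linarith
  qed
  also have "\<dots> = 2 * t / 3" using t by (simp add: field_simps power2_eq_square power3_eq_cube power4_eq_xxxx)
  finally show ?thesis using x by simp
qed

lemma g_npi: "g (real n * pi) = (-1)^n * sinh (real n * pi)"
  by (simp add: g_def)

lemma g_cont: "continuous_on S g"
  using g_deriv by (meson DERIV_isCont continuous_at_imp_continuous_on)

lemma g_zero_exists: assumes "1 \<le> n"
  shows "\<exists>t. real n * pi < t \<and> t < real (Suc n) * pi \<and> g t = 0"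
proof -
  have p1: "0 < sinh (real n * pi)" using assms by simp
  have p2: "0 < sinh (real (Suc n) * pi)" by simp
  have le: "real n * pi \<le> real (Suc n) * pi" by simp
  obtain t where t: "real n * pi \<le> t" "t \<le> real (Suc n) * pi" "g t = 0"
  proof (cases "even n")
    case True
    then have "g (real n * pi) > 0" "g (real (Suc n) * pi) < 0"
      using p1 p2 by (simp_all only: g_npi) simp_all
    then show ?thesis using IVT2'[of g "real (Suc n) * pi" 0 "real n * pi", OF _ _ le g_cont] that by force
  next
    case False
    then have "g (real n * pi) < 0" "g (real (Suc n) * pi) > 0"
      using p1 p2 by (simp_all only: g_npi) simp_all
    then show ?thesis using IVT'[of g "real n * pi" 0 "real (Suc n) * pi", OF _ _ le g_cont] that by force
  qed
  moreover have "t \<noteq> real n * pi" "t \<noteq> real (Suc n) * pi"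
    using t(3) p1 p2 by (auto simp only: g_npi) auto
  ultimately show ?thesis by (intro exI[of _ t]) auto
qed

lemma sin_nz: assumes "real n * pi < u" "u < real (Suc n) * pi" shows "sin u \<noteq> 0"
proof
  assume "sin u = 0"
  then obtain i :: int where i: "u = of_int i * pi" by (auto simp: sin_zero_iff_int2)
  with assms have "real_of_int (int n) < of_int i" "of_int i < real_of_int (int (Suc n))" by auto
  then have "int n < i" "i < int (Suc n)" by (simp_all only: of_int_less_iff)
  then show False by linarith
qed

lemma g_zero_unique: assumes "1 \<le> n" "real n * pi < a" "a < b" "b < real (Suc n) * pi" "g a = 0" "g b = 0"
  shows False
proof -
  define q :: "real \<Rightarrow> real" where "q u = cos u / sin u - cosh u / sinh u" for u
  have pos: "0 < u" if "real n * pi \<le> u" for u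
    using that assms(1) by (smt (verit) mult_pos_pos of_nat_0_less_iff pi_gt_zero less_le_trans le_add_same_cancel1 of_nat_1 of_nat_le_iff mult_le_cancel_right1)
  have "q b < q a"
  proof (rule DERIV_neg_imp_decreasing[OF assms(3)])
    fix u assume u: "a \<le> u" "u \<le> b"
    have s: "sin u \<noteq> 0" by (rule sin_nz[of n]) (use u assms in auto)
    have u0: "0 < u" using pos[of u] u assms by auto
    have sh: "sinh u \<noteq> 0" using u0 by simp
    have E: "0 < EE u" using EE_pos[OF u0] .
    have d1: "((\<lambda>u. cos u / sin u) has_real_derivative ((- sin u) * sin u - cos u * cos u)/(sin u * sin u)) (at u)"
      by (rule DERIV_divide[OF DERIV_cos DERIV_sin s])
    have d2: "((\<lambda>u. sinh u) has_real_derivative cosh u) (at u)" "((\<lambda>u. cosh u) has_real_derivative sinh u) (at u)"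
      by (rule derivative_eq_intros refl | simp)+
    have d3: "((\<lambda>u. cosh u / sinh u) has_real_derivative (sinh u * sinh u - cosh u * cosh u)/(sinh u * sinh u)) (at u)"
      by (rule DERIV_divide[OF d2(2) d2(1) sh])
    have "(q has_real_derivative ((- sin u) * sin u - cos u * cos u)/(sin u * sin u) - (sinh u * sinh u - cosh u * cosh u)/(sinh u * sinh u)) (at u)"
      unfolding q_def[abs_def] by (rule DERIV_diff[OF d1 d3])
    moreover have "((- sin u) * sin u - cos u * cos u)/(sin u * sin u) - (sinh u * sinh u - cosh u * cosh u)/(sinh u * sinh u)
        = - EE u / (sin u ^ 2 * sinh u ^ 2)"
      using s sh pyth2[of u] unfolding EE_def
      apply (simp add: field_simps power2_eq_square)
      using sin_cos_squared_add3[of u] by algebra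
    moreover have "- EE u / (sin u ^ 2 * sinh u ^ 2) < 0" using E s sh by simp
    ultimately show "\<exists>y. (q has_real_derivative y) (at u) \<and> y < 0" by auto
  qed
  moreover have "q a = 0" "q b = 0"
  proof -
    have "sin a \<noteq> 0" "sin b \<noteq> 0" using sin_nz[of n a] sin_nz[of n b] assms by auto
    moreover have "sinh a \<noteq> 0" "sinh b \<noteq> 0" using pos[of a] pos[of b] assms by auto
    ultimately show "q a = 0" "q b = 0" using assms(5,6) unfolding q_def g_def by (simp_all add: field_simps)
  qed
  ultimately show False by simp
qed

definition zz :: "nat \<Rightarrow> real" where
  "zz n = (THE t. real n * pi < t \<and> t < real (Suc n) * pi \<and> g t = 0)"

lemma zz_ex1: assumes "1 \<le> n" shows "\<exists>!t. real n * pi < t \<and> t < real (Suc n) * pi \<and> g t = 0"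
proof -
  obtain t where t: "real n * pi < t" "t < real (Suc n) * pi" "g t = 0" using g_zero_exists[OF assms] by blast
  show ?thesis
  proof (rule ex1I[of _ t])
    fix y assume y: "real n * pi < y \<and> y < real (Suc n) * pi \<and> g y = 0"
    show "y = t"
    proof (rule ccontr)
      assume "y \<noteq> t"
      then consider "y < t" | "t < y" by linarith
      then show False
      proof cases
        case 1 then show ?thesis using g_zero_unique[OF assms, of y t] y t by auto
      next
        case 2 then show ?thesis using g_zero_unique[OF assms, of t y] y t by auto
      qed
    qed
  qed (use t in auto)
qed

lemma zz: assumes "1 \<le> n" shows "real n * pi < zz n" "zz n < real (Suc n) * pi" "g (zz n) = 0"
  using theI'[OF zz_ex1[OF assms]] unfolding zz_def by auto

lemma zz_unique: assumes "1 \<le> n" "real n * pi < t" "t < real (Suc n) * pi" "g t = 0" shows "t = zz n"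
  using zz_ex1[OF assms(1)] zz[OF assms(1)] assms(2-4) by blast

lemma g_zero_pos: assumes "0 < t" "g t = 0" shows "\<exists>n\<ge>1. t = zz n"
proof -
  have tpi: "pi < t" using g_neg[of t] assms by force
  define n where "n = nat \<lfloor>t / pi\<rfloor>"
  have fl: "real_of_int \<lfloor>t / pi\<rfloor> \<le> t / pi" "t / pi < real_of_int \<lfloor>t / pi\<rfloor> + 1" by linarith+
  have "1 < t / pi" using tpi by simp
  then have f1: "1 \<le> \<lfloor>t / pi\<rfloor>" by linarith
  have rn: "real n = real_of_int \<lfloor>t / pi\<rfloor>" unfolding n_def by (rule of_nat_nat) (use f1 in linarith)
  have n1: "1 \<le> n" using f1 unfolding n_def by linarith
  have "real n \<le> t / pi" "t / pi < real n + 1" using fl rn by auto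
  then have a: "real n * pi \<le> t" "t < real (Suc n) * pi" by (auto simp: field_simps)
  have "t \<noteq> real n * pi"
  proof
    assume "t = real n * pi"
    then have "g t = (-1)^n * sinh (real n * pi)" by (simp add: g_npi)
    moreover have "sinh (real n * pi) \<noteq> 0" using n1 by simp
    ultimately show False using assms by simp
  qed
  with a have "real n * pi < t" by simp
  then show ?thesis using zz_unique[OF n1 _ a(2) assms(2)] n1 by blast
qed

definition ss :: "nat \<Rightarrow> real" where "ss k = (if k = 0 then 0 else 2 * zz k)"

lemma ss_mono: "strict_mono ss"
proof (rule strict_mono_Suc_iff[THEN iffD2], intro allI)
  fix k
  show "ss k < ss (Suc k)"
  proof (cases "k = 0")
    case True
    then show ?thesis using zz[of 1] pi_gt_zero by (simp add: ss_def)
  next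
    case False
    then have "zz k < real (Suc k) * pi" "real (Suc k) * pi < zz (Suc k)"
      using zz[of k] zz[of "Suc k"] by auto
    then show ?thesis using False by (simp add: ss_def)
  qed
qed

lemma ss_pos: "0 < k \<Longrightarrow> 0 < ss k"
  using ss_mono strict_mono_less[of ss 0 k] by (simp add: ss_def)

lemma zero_set: "{x. x \<ge> 0 \<and> mu x = 0} = range ss"
proof (rule set_eqI, rule iffI)
  fix x assume "x \<in> {x. x \<ge> 0 \<and> mu x = 0}"
  then have x: "0 \<le> x" "mu x = 0" by auto
  show "x \<in> range ss"
  proof (cases "x = 0")
    case True then show ?thesis by (intro range_eqI[of _ _ 0]) (simp add: ss_def)
  next
    case False
    then have "0 < x" using x by simp
    then have "g (x/2) = 0" using mu_zero_iff x by simp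
    then obtain n where "n \<ge> 1" "x/2 = zz n" using g_zero_pos[of "x/2"] \<open>0 < x\<close> by auto
    then show ?thesis by (intro range_eqI[of _ _ n]) (auto simp: ss_def)
  qed
next
  fix x assume "x \<in> range ss"
  then obtain k where k: "x = ss k" by auto
  show "x \<in> {x. x \<ge> 0 \<and> mu x = 0}"
  proof (cases "k = 0")
    case True then show ?thesis using k by (simp add: ss_def mu_def)
  next
    case False
    then have "0 < x" "g (x/2) = 0" using k ss_pos[of k] zz[of k] by (auto simp: ss_def)
    then show ?thesis using mu_zero_iff by auto
  qed
qed

lemma between: assumes "ss k < x" "x < ss (Suc k)" shows "0 < x" "g (x/2) \<noteq> 0" "0 < mu x"
proof -
  show x0: "0 < x" using assms ss_mono strict_mono_less_eq[of ss 0 k] by (simp add: ss_def)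
  show "g (x/2) \<noteq> 0"
  proof
    assume "g (x/2) = 0"
    then have "mu x = 0" using mu_zero_iff x0 by simp
    then have "x \<in> range ss" using zero_set x0 by auto
    then obtain j where j: "x = ss j" by auto
    then have "k < j" "j < Suc k" using assms ss_mono by (auto simp: strict_mono_less)
    then show False by simp
  qed
  then show "0 < mu x" using mu_nonneg[of x] mu_zero_iff[OF x0] x0 by simp
qed

lemma mu_cont0: "continuous (at 0 within {0..}) mu"
proof -
  have ev: "eventually (\<lambda>x. 0 \<le> mu x \<and> mu x \<le> x / 3) (at 0 within {0..})"
  proof -
    have "\<forall>x\<in>{0..}. x \<noteq> 0 \<and> dist x 0 < 4 \<longrightarrow> 0 \<le> mu x \<and> mu x \<le> x / 3"
    proof (intro ballI impI)
      fix x :: real assume "x \<in> {0..}" "x \<noteq> 0 \<and> dist x 0 < 4"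
      then have "0 < x" "x \<le> 4" by (auto simp: dist_real_def)
      then show "0 \<le> mu x \<and> mu x \<le> x / 3" using mu_nonneg mu_small by auto
    qed
    then show ?thesis unfolding eventually_at by (intro exI[of _ 4]) auto
  qed
  have t: "((\<lambda>x::real. x / 3) \<longlongrightarrow> 0) (at 0 within {0..})"
  proof -
    have "((\<lambda>x::real. x / 3) \<longlongrightarrow> 0 / 3) (at 0 within {0..})"
      by (intro tendsto_intros) simp
    then show ?thesis by simp
  qed
  have "(mu \<longlongrightarrow> 0) (at 0 within {0..})"
    by (rule tendsto_sandwich[OF _ _ tendsto_const t]) (use ev in \<open>auto elim: eventually_mono\<close>)
  then show ?thesis unfolding continuous_within by (simp add: mu_def)
qed

lemma mu_cont: "continuous_on {0..} mu"
proof -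
  have "continuous (at x within {0..}) mu" if "x \<in> {0..}" for x
  proof (cases "x = 0")
    case True then show ?thesis using mu_cont0 by simp
  next
    case False
    then have "0 < x" using that by simp
    then show ?thesis using mu_isCont continuous_at_imp_continuous_within by blast
  qed
  then show ?thesis using continuous_on_eq_continuous_within by blast
qed

lemma mu_cont_ab: assumes "0 \<le> a" shows "continuous_on {a..b} mu"
  by (rule continuous_on_subset[OF mu_cont]) (use assms in auto)

lemma deriv_between: assumes "ss k < x" "x < ss (Suc k)"
  shows "\<exists>c>0. (mu has_real_derivative c * FF (x/2)) (at x)"
  using mu_deriv_FF[of "x/2"] between[OF assms] by simp

lemma FF_decr: assumes "ss k < 2*p" "p < q" "2*q < ss (Suc k)" shows "FF q < FF p"
proof (rule DERIV_neg_imp_decreasing[OF assms(2)])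
  fix u assume u: "p \<le> u" "u \<le> q"
  have b: "0 < 2*u" "g (2*u/2) \<noteq> 0" using between[of k "2*u"] u assms by auto
  then have "0 < u" "g u \<noteq> 0" by auto
  moreover have "EE u \<noteq> 0" using EE_pos \<open>0 < u\<close> by (metis less_irrefl)
  ultimately show "\<exists>y. (FF has_real_derivative y) (at u) \<and> y < 0"
    using FF_deriv FF_deriv_neg by blast
qed

lemma crit_FF: assumes "ss k < m" "m < ss (Suc k)" "(mu has_real_derivative 0) (at m)"
  shows "FF (m/2) = 0"
proof -
  obtain c where c: "c > 0" "(mu has_real_derivative c * FF (m/2)) (at m)"
    using deriv_between[OF assms(1,2)] by blast
  have "c * FF (m/2) = 0" using DERIV_unique[OF c(2) assms(3)] .
  then show ?thesis using c(1) by simp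
qed

lemma main_k:
  shows "(\<exists>!m. ss k < m \<and> m < ss (Suc k) \<and> (mu has_real_derivative 0) (at m)) \<and>
         (\<forall>m. ss k < m \<and> m < ss (Suc k) \<and> (mu has_real_derivative 0) (at m) \<longrightarrow>
               strict_mono_on {ss k..m} mu \<and> strict_antimono_on {m..ss (Suc k)} mu)"
proof -
  let ?a = "ss k" and ?b = "ss (Suc k)"
  have ab: "?a < ?b" using ss_mono by (simp add: strict_mono_def)
  have a0: "0 \<le> ?a" using ss_pos[of k] by (cases k) (auto simp: ss_def)
  have mua: "mu ?a = 0" "mu ?b = 0" using zero_set by blast+
  have cont: "continuous_on {?a..?b} mu" by (rule mu_cont_ab[OF a0])
  have ex: "\<exists>m. ?a < m \<and> m < ?b \<and> (mu has_real_derivative 0) (at m)"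
  proof (rule Rolle[OF ab _ cont])
    show "mu ?a = mu ?b" using mua by simp
    fix x assume "?a < x" "x < ?b"
    then show "mu differentiable (at x)"
      using deriv_between[of k x] by (auto simp: real_differentiable_def)
  qed
  have uniq: "m1 = m2" if m1: "?a < m1 \<and> m1 < ?b \<and> (mu has_real_derivative 0) (at m1)"
    and m2: "?a < m2 \<and> m2 < ?b \<and> (mu has_real_derivative 0) (at m2)" for m1 m2
  proof (rule ccontr)
    assume ne: "m1 \<noteq> m2"
    have f1: "FF (m1/2) = 0" "FF (m2/2) = 0" using crit_FF m1 m2 by blast+
    consider "m1 < m2" | "m2 < m1" using ne by linarith
    then show False
    proof cases
      case 1 then show ?thesis using FF_decr[of k "m1/2" "m2/2"] m1 m2 f1 by auto
    next
      case 2 then show ?thesis using FF_decr[of k "m2/2" "m1/2"] m1 m2 f1 by auto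
    qed
  qed
  have mono: "strict_mono_on {?a..m} mu \<and> strict_antimono_on {m..?b} mu"
    if m: "?a < m" "m < ?b" "(mu has_real_derivative 0) (at m)" for m
  proof
    have fm: "FF (m/2) = 0" using crit_FF m by blast
    show "strict_mono_on {?a..m} mu"
    proof (rule monotone_onI)
      fix x y assume xy: "x \<in> {?a..m}" "y \<in> {?a..m}" "x < y"
      show "mu x < mu y"
      proof (rule DERIV_pos_imp_increasing_open[OF xy(3)])
        fix u assume u: "x < u" "u < y"
        then have u1: "?a < u" "u < m" using xy by auto
        obtain c where c: "c > 0" "(mu has_real_derivative c * FF (u/2)) (at u)"
          using deriv_between[of k u] u1 m by auto
        have "FF (m/2) < FF (u/2)" using FF_decr[of k "u/2" "m/2"] u1 m by auto
        then show "\<exists>y. (mu has_real_derivative y) (at u) \<and> 0 < y" using c fm by auto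
      next
        show "continuous_on {x..y} mu" by (rule continuous_on_subset[OF cont]) (use xy m in auto)
      qed
    qed
    show "strict_antimono_on {m..?b} mu"
    proof (rule monotone_onI)
      fix x y assume xy: "x \<in> {m..?b}" "y \<in> {m..?b}" "x < y"
      show "mu y < mu x"
      proof (rule DERIV_neg_imp_decreasing_open[OF xy(3)])
        fix u assume u: "x < u" "u < y"
        then have u1: "m < u" "u < ?b" using xy by auto
        obtain c where c: "c > 0" "(mu has_real_derivative c * FF (u/2)) (at u)"
          using deriv_between[of k u] u1 m by auto
        have "FF (u/2) < FF (m/2)" using FF_decr[of k "m/2" "u/2"] u1 m by auto
        then show "\<exists>y. (mu has_real_derivative y) (at u) \<and> y < 0" using c fm
          by (intro exI[of _ "c * FF (u/2)"]) (auto simp: mult_pos_neg)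
      next
        show "continuous_on {x..y} mu" by (rule continuous_on_subset[OF cont]) (use xy m in auto)
      qed
    qed
  qed
  show ?thesis using ex uniq mono by blast
qed

theorem mainTheorem6:
  shows "(\<forall>x\<ge>0. mu x \<ge> 0) \<and>
    (\<exists>s :: nat \<Rightarrow> real. s 0 = 0 \<and> strict_mono s \<and>
       {x. x \<ge> 0 \<and> mu x = 0} = range s \<and>
       (\<forall>k. (\<exists>!m. s k < m \<and> m < s (Suc k) \<and> (mu has_real_derivative 0) (at m)) \<and>
            (\<forall>m. s k < m \<and> m < s (Suc k) \<and> (mu has_real_derivative 0) (at m) \<longrightarrow>
                 strict_mono_on {s k..m} mu \<and> strict_antimono_on {m..s (Suc k)} mu)))"
proof (intro conjI allI impI)
  show "\<And>x. 0 \<le> x \<Longrightarrow> 0 \<le> mu x" by (rule mu_nonneg)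
  show "\<exists>s :: nat \<Rightarrow> real. s 0 = 0 \<and> strict_mono s \<and>
       {x. x \<ge> 0 \<and> mu x = 0} = range s \<and>
       (\<forall>k. (\<exists>!m. s k < m \<and> m < s (Suc k) \<and> (mu has_real_derivative 0) (at m)) \<and>
            (\<forall>m. s k < m \<and> m < s (Suc k) \<and> (mu has_real_derivative 0) (at m) \<longrightarrow>
                 strict_mono_on {s k..m} mu \<and> strict_antimono_on {m..s (Suc k)} mu))"
    by (intro exI[of _ ss] conjI allI main_k ss_mono zero_set) (simp add: ss_def)
qed

end
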